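(* Let $(X,\Sigma)$ be a measurable space, $p$ a transition function on it with associated operator $A$ on $ba(X,\Sigma)$, and let $K=\{\mu_1,\dots,\mu_m\}$ be a finitely additive cycle of measures of $A$ of period $m$ whose cyclic measures are pairwise disjoint. For each $i$ let $\mu_i=\mu_i^{ca}+\mu_i^{pfa}$ be the decomposition of $\mu_i$ into a countably additive component $\mu_i^{ca}$ and a purely finitely additive component $\mu_i^{pfa}$. Then these components are also cyclic: $K^{ca}=\{\mu_1^{ca},\dots,\mu_m^{ca}\}$ and $K^{pfa}=\{\mu_1^{pfa},\dots,\mu_m^{pfa}\}$ form cycles (i.e. $A\mu_i^{ca}=\mu_{i+1}^{ca}$, $A\mu_i^{pfa}=\mu_{i+1}^{pfa}$ for $1\le i\le m-1$, $A\mu_m^{ca}=\mu_1^{ca}$, $A\mu_m^{pfa}=\mu_1^{pfa}$); $K$ is the coordinatewise sum $K=K^{ca}+K^{pfa}$; the mean measure of $K$ is uniquely representable as the sum of its countably additive and purely finitely additive components, and these coincide with the mean measures of $K^{ca}$ and $K^{pfa}$ respectively. Moreover the measures of $K^{ca}$ are pairwise disjoint, the measures of $K^{pfa}$ are pairwise disjoint, and every measure from $K^{ca}$ is disjoint with every measure from $K^{pfa}$.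
   Context: $X$ is an arbitrary infinite set and $\Sigma$ a $\sigma$-algebra of subsets of $X$ containing all one-point sets. $ba(X,\Sigma)$ denotes the space of bounded finitely additive real-valued measures on $\Sigma$, ordered setwise. A nonnegative finitely additive measure is purely finitely additive if every countably additive measure $\lambda$ with $0\le\lambda\le\mu$ is zero; every finitely additive measure decomposes uniquely as a sum of a countably additive and a purely finitely additive measure. For positive $\mu,\nu\in ba(X,\Sigma)$, $(\mu\wedge\nu)(E)=\inf\{\mu(C)+\nu(E\setminus C): C\subset E, C\in\Sigma\}$, and $\mu,\nu$ are called disjoint if $\mu\wedge\nu=0$. A transition function is a map $p(x,E)$ with $0\le p(x,E)\le1$, $p(x,X)=1$, $p(\cdot,E)$ bounded $\Sigma$-measurable for every $E$, and $p(x,\cdot)$ countably additive for every $x$. The Markov operator is $A\mu(E)=\int_X p(x,E)\,\mu(dx)$. A cycle of measures of $A$ is a finite numbered set $\{\mu_1,\dots,\mu_m\}$ of pairwise different positive finitely additive measures with $A\mu_i=\mu_{i+1}$ ($1\le i\le m-1$), $A\mu_m=\mu_1$; its mean measure is $\frac1m\sum_k\mu_k$. The sum of two cycles of the same period is obtained by coordinatewise addition. *)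

theory Defs
  imports "HOL-Analysis.Analysis"
begin

text \<open>Finitely additive real-valued set functions on the sigma-algebra sets M.
  Measures are represented as functions 'a set => real; only their values on
  sets M matter.\<close>

definition pos_fa :: "'a measure \<Rightarrow> ('a set \<Rightarrow> real) \<Rightarrow> bool" where
  "pos_fa M \<mu> \<longleftrightarrow> \<mu> {} = 0 \<and> (\<forall>E\<in>sets M. 0 \<le> \<mu> E) \<and>
     (\<forall>A\<in>sets M. \<forall>B\<in>sets M. A \<inter> B = {} \<longrightarrow> \<mu> (A \<union> B) = \<mu> A + \<mu> B)"

definition count_add :: "'a measure \<Rightarrow> ('a set \<Rightarrow> real) \<Rightarrow> bool" where
  "count_add M \<mu> \<longleftrightarrow> (\<forall>F::nat \<Rightarrow> 'a set. range F \<subseteq> sets M \<longrightarrow> disjoint_family F \<longrightarrow>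
      (\<lambda>n. \<mu> (F n)) sums \<mu> (\<Union>n. F n))"

definition pos_ca :: "'a measure \<Rightarrow> ('a set \<Rightarrow> real) \<Rightarrow> bool" where
  "pos_ca M \<mu> \<longleftrightarrow> pos_fa M \<mu> \<and> count_add M \<mu>"

definition pos_pfa :: "'a measure \<Rightarrow> ('a set \<Rightarrow> real) \<Rightarrow> bool" where
  "pos_pfa M \<mu> \<longleftrightarrow> pos_fa M \<mu> \<and>
     (\<forall>\<nu>. pos_ca M \<nu> \<and> (\<forall>E\<in>sets M. \<nu> E \<le> \<mu> E) \<longrightarrow> (\<forall>E\<in>sets M. \<nu> E = 0))"

definition fa_meet :: "'a measure \<Rightarrow> ('a set \<Rightarrow> real) \<Rightarrow> ('a set \<Rightarrow> real) \<Rightarrow> 'a set \<Rightarrow> real" where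
  "fa_meet M \<mu> \<nu> E = Inf {\<mu> C + \<nu> (E - C) | C. C \<in> sets M \<and> C \<subseteq> E}"

definition fa_disjoint :: "'a measure \<Rightarrow> ('a set \<Rightarrow> real) \<Rightarrow> ('a set \<Rightarrow> real) \<Rightarrow> bool" where
  "fa_disjoint M \<mu> \<nu> \<longleftrightarrow> (\<forall>E\<in>sets M. fa_meet M \<mu> \<nu> E = 0)"

text \<open>Integral of a bounded measurable function against a positive finitely
  additive measure (lower Darboux sums over finite measurable partitions of the
  space; for bounded measurable f this is the usual integral).\<close>
definition meas_partition :: "'a measure \<Rightarrow> 'a set set \<Rightarrow> bool" where
  "meas_partition M P \<longleftrightarrow> finite P \<and> P \<subseteq> sets M \<and> {} \<notin> P \<and> disjoint P \<and> \<Union>P = space M"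

definition fa_integral :: "'a measure \<Rightarrow> ('a set \<Rightarrow> real) \<Rightarrow> ('a \<Rightarrow> real) \<Rightarrow> real" where
  "fa_integral M \<mu> f = Sup {(\<Sum>B\<in>P. (INF x\<in>B. f x) * \<mu> B) | P. meas_partition M P}"

definition transition_function :: "'a measure \<Rightarrow> ('a \<Rightarrow> 'a set \<Rightarrow> real) \<Rightarrow> bool" where
  "transition_function M p \<longleftrightarrow>
     (\<forall>x\<in>space M. \<forall>E\<in>sets M. 0 \<le> p x E \<and> p x E \<le> 1) \<and>
     (\<forall>x\<in>space M. p x (space M) = 1) \<and>
     (\<forall>E\<in>sets M. (\<lambda>x. p x E) \<in> borel_measurable M) \<and>
     (\<forall>x\<in>space M. pos_ca M (p x))"

definition markov_op :: "'a measure \<Rightarrow> ('a \<Rightarrow> 'a set \<Rightarrow> real) \<Rightarrow> ('a set \<Rightarrow> real) \<Rightarrow> 'a set \<Rightarrow> real" where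
  "markov_op M p \<mu> E = fa_integral M \<mu> (\<lambda>x. p x E)"

definition mean_measure :: "nat \<Rightarrow> (nat \<Rightarrow> 'a set \<Rightarrow> real) \<Rightarrow> 'a set \<Rightarrow> real" where
  "mean_measure m \<mu> E = (\<Sum>k<m. \<mu> k E) / real m"

definition cyclic_rel :: "'a measure \<Rightarrow> ('a \<Rightarrow> 'a set \<Rightarrow> real) \<Rightarrow> nat \<Rightarrow> (nat \<Rightarrow> 'a set \<Rightarrow> real) \<Rightarrow> bool" where
  "cyclic_rel M p m \<mu> \<longleftrightarrow> (\<forall>i<m. \<forall>E\<in>sets M. markov_op M p (\<mu> i) E = \<mu> (Suc i mod m) E)"

definition fa_cycle :: "'a measure \<Rightarrow> ('a \<Rightarrow> 'a set \<Rightarrow> real) \<Rightarrow> nat \<Rightarrow> (nat \<Rightarrow> 'a set \<Rightarrow> real) \<Rightarrow> bool" where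
  "fa_cycle M p m \<mu> \<longleftrightarrow> 1 \<le> m \<and> (\<forall>i<m. pos_fa M (\<mu> i)) \<and>
     (\<forall>i<m. \<forall>j<m. i \<noteq> j \<longrightarrow> (\<exists>E\<in>sets M. \<mu> i E \<noteq> \<mu> j E)) \<and> cyclic_rel M p m \<mu>"

end

theory Submission
  imports Defs
begin

lemma fa_union: "pos_fa M \<nu> \<Longrightarrow> A \<in> sets M \<Longrightarrow> B \<in> sets M \<Longrightarrow> A \<inter> B = {} \<Longrightarrow> \<nu> (A \<union> B) = \<nu> A + \<nu> B"
  unfolding pos_fa_def by blast

lemma fa_nonneg: "pos_fa M \<nu> \<Longrightarrow> A \<in> sets M \<Longrightarrow> 0 \<le> \<nu> A"
  unfolding pos_fa_def by blast

lemma fa_empty: "pos_fa M \<nu> \<Longrightarrow> \<nu> {} = 0"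
  unfolding pos_fa_def by blast

lemma fa_diff:
  assumes "pos_fa M \<nu>" "A \<in> sets M" "B \<in> sets M" "A \<subseteq> B"
  shows "\<nu> (B - A) = \<nu> B - \<nu> A"
proof -
  have "B = A \<union> (B - A)" using assms by auto
  then have "\<nu> B = \<nu> A + \<nu> (B - A)"
    using fa_union[OF assms(1) assms(2), of "B - A"] assms by auto
  then show ?thesis by simp
qed

lemma fa_mono:
  assumes "pos_fa M \<nu>" "A \<in> sets M" "B \<in> sets M" "A \<subseteq> B"
  shows "\<nu> A \<le> \<nu> B"
  using fa_diff[OF assms] fa_nonneg[OF assms(1), of "B - A"] assms by auto

lemma fa_compl:
  assumes "pos_fa M \<nu>" "E \<in> sets M"
  shows "\<nu> E + \<nu> (space M - E) = \<nu> (space M)"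
  using fa_diff[OF assms(1) assms(2) sets.top] sets.sets_into_space[OF assms(2)] by simp

lemma fa_sum:
  assumes "pos_fa M \<nu>" "finite I" "\<forall>i\<in>I. F i \<in> sets M" "disjoint_family_on F I"
  shows "\<nu> (\<Union>i\<in>I. F i) = (\<Sum>i\<in>I. \<nu> (F i))"
  using assms(2,3,4)
proof (induction I rule: finite_induct)
  case empty
  then show ?case using fa_empty[OF assms(1)] by simp
next
  case (insert j I)
  have dj: "disjoint_family_on F I" using insert.prems(2) disjoint_family_on_mono by blast
  have "F j \<inter> F i = {}" if "i \<in> I" for i
    using insert.prems(2) insert.hyps(2) that unfolding disjoint_family_on_def by (metis insertCI)
  then have dis: "F j \<inter> (\<Union>i\<in>I. F i) = {}" by auto
  have Fj: "F j \<in> sets M" using insert.prems(1) by simp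
  have UI: "(\<Union>i\<in>I. F i) \<in> sets M" using insert.prems(1) insert.hyps(1) by auto
  have "\<nu> (F j \<union> (\<Union>i\<in>I. F i)) = \<nu> (F j) + \<nu> (\<Union>i\<in>I. F i)"
    by (rule fa_union[OF assms(1) Fj UI dis])
  moreover have "\<nu> (\<Union>i\<in>I. F i) = (\<Sum>i\<in>I. \<nu> (F i))"
    using insert.IH insert.prems(1) dj by simp
  ultimately show ?case using insert.hyps by simp
qed

lemma fa_sum_lessThan:
  fixes F :: "nat \<Rightarrow> 'a set"
  assumes "pos_fa M \<nu>" "range F \<subseteq> sets M" "disjoint_family F"
  shows "\<nu> (\<Union>i<n. F i) = (\<Sum>i<n. \<nu> (F i))"
proof -
  have d: "disjoint_family_on F {..<n}" using assms(3) disjoint_family_on_mono[of "{..<n}" UNIV F] by simp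
  have s: "\<forall>i\<in>{..<n}. F i \<in> sets M" using assms(2) by auto
  show ?thesis by (rule fa_sum[OF assms(1) finite_lessThan s d])
qed

lemma ca_sums:
  assumes "pos_ca M \<nu>" "range F \<subseteq> sets M" "disjoint_family F"
  shows "(\<lambda>n. \<nu> (F n)) sums \<nu> (\<Union>n. F n)"
  using assms(1) assms(2,3) unfolding pos_ca_def count_add_def by simp

lemma dom_ca:
  assumes k: "pos_fa M \<kappa>" and l: "pos_ca M la" and le: "\<forall>E\<in>sets M. \<kappa> E \<le> la E"
  shows "pos_ca M \<kappa>"
  unfolding pos_ca_def count_add_def
proof (intro conjI k allI impI)
  fix F :: "nat \<Rightarrow> _" assume F: "range F \<subseteq> sets M" "disjoint_family F"
  let ?U = "\<Union>n. F n"
  have U: "?U \<in> sets M" using F by auto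
  have lf: "pos_fa M la" using l unfolding pos_ca_def by blast
  have ls: "(\<lambda>N. \<Sum>n<N. la (F n)) \<longlonglongrightarrow> la ?U"
    using ca_sums[OF l F] unfolding sums_def .
  have bnd: "\<kappa> ?U - (la ?U - (\<Sum>n<N. la (F n))) \<le> (\<Sum>n<N. \<kappa> (F n)) \<and> (\<Sum>n<N. \<kappa> (F n)) \<le> \<kappa> ?U" for N
  proof -
    let ?V = "\<Union>n<N. F n"
    have V: "?V \<in> sets M" using F by auto
    have VU: "?V \<subseteq> ?U" by auto
    have UV: "?U - ?V \<in> sets M" by (rule sets.Diff[OF U V])
    have "(\<Sum>n<N. \<kappa> (F n)) = \<kappa> ?V" using fa_sum_lessThan[OF k F] by simp
    moreover have "(\<Sum>n<N. la (F n)) = la ?V" using fa_sum_lessThan[OF lf F] by simp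
    moreover have "\<kappa> (?U - ?V) = \<kappa> ?U - \<kappa> ?V" by (rule fa_diff[OF k V U VU])
    moreover have "la (?U - ?V) = la ?U - la ?V" by (rule fa_diff[OF lf V U VU])
    moreover have "\<kappa> (?U - ?V) \<le> la (?U - ?V)" using le UV by blast
    moreover have "0 \<le> \<kappa> (?U - ?V)" using fa_nonneg[OF k UV] .
    ultimately show ?thesis by linarith
  qed
  have lo: "(\<lambda>N. \<kappa> ?U - (la ?U - (\<Sum>n<N. la (F n)))) \<longlonglongrightarrow> \<kappa> ?U - (la ?U - la ?U)"
    by (intro tendsto_intros ls)
  have e1: "\<forall>\<^sub>F N in sequentially. \<kappa> ?U - (la ?U - (\<Sum>n<N. la (F n))) \<le> (\<Sum>n<N. \<kappa> (F n))"
    using bnd by (intro always_eventually) blast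
  have e2: "\<forall>\<^sub>F N in sequentially. (\<Sum>n<N. \<kappa> (F n)) \<le> \<kappa> ?U"
    using bnd by (intro always_eventually) blast
  have lo': "(\<lambda>N. \<kappa> ?U - (la ?U - (\<Sum>n<N. la (F n)))) \<longlonglongrightarrow> \<kappa> ?U"
    using lo by simp
  show "(\<lambda>n. \<kappa> (F n)) sums \<kappa> ?U"
    unfolding sums_def by (rule tendsto_sandwich[OF e1 e2 lo' tendsto_const])
qed

lemma meet_eq: "fa_meet M \<mu> \<nu> E = (INF C\<in>{C\<in>sets M. C \<subseteq> E}. \<mu> C + \<nu> (E - C))"
  unfolding fa_meet_def by (rule arg_cong[where f=Inf]) auto

lemma meet_bdd: "bdd_below ((\<lambda>C. \<mu> C + \<nu> (E - C)) ` {C\<in>sets M. C \<subseteq> E})"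
  if "pos_fa M \<mu>" "pos_fa M \<nu>" "E \<in> sets M"
proof (rule bdd_belowI[where m=0])
  fix x assume "x \<in> (\<lambda>C. \<mu> C + \<nu> (E - C)) ` {C\<in>sets M. C \<subseteq> E}"
  then obtain C where C: "C \<in> sets M" "C \<subseteq> E" and x: "x = \<mu> C + \<nu> (E - C)" by blast
  have "E - C \<in> sets M" using C that(3) by blast
  then show "0 \<le> x" unfolding x using fa_nonneg[OF that(1) C(1)] fa_nonneg[OF that(2)] by simp
qed

lemma meet_ne: "{C\<in>sets M. C \<subseteq> E} \<noteq> {}"
  by auto

lemma meet_lower:
  assumes "pos_fa M \<mu>" "pos_fa M \<nu>" "E \<in> sets M" "C \<in> sets M" "C \<subseteq> E"
  shows "fa_meet M \<mu> \<nu> E \<le> \<mu> C + \<nu> (E - C)"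
  unfolding meet_eq by (rule cINF_lower[OF meet_bdd[OF assms(1-3)]]) (use assms in auto)

lemma meet_greatest:
  assumes "\<And>C. C \<in> sets M \<Longrightarrow> C \<subseteq> E \<Longrightarrow> c \<le> \<mu> C + \<nu> (E - C)"
  shows "c \<le> fa_meet M \<mu> \<nu> E"
  unfolding meet_eq by (rule cINF_greatest[OF meet_ne]) (use assms in auto)

lemma meet_nonneg: assumes "pos_fa M \<mu>" "pos_fa M \<nu>" "E \<in> sets M" shows "0 \<le> fa_meet M \<mu> \<nu> E"
proof (rule meet_greatest)
  fix C assume C: "C \<in> sets M" "C \<subseteq> E"
  note assms
  moreover have "E - C \<in> sets M" using C \<open>E \<in> sets M\<close> by blast
  ultimately show "0 \<le> \<mu> C + \<nu> (E - C)" using fa_nonneg[of M \<mu> C] fa_nonneg[of M \<nu> "E - C"] C by simp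
qed

lemma meet_le1: "pos_fa M \<mu> \<Longrightarrow> pos_fa M \<nu> \<Longrightarrow> E \<in> sets M \<Longrightarrow> fa_meet M \<mu> \<nu> E \<le> \<mu> E"
  using meet_lower[of M \<mu> \<nu> E E] fa_empty[of M \<nu>] by simp

lemma meet_le2: "pos_fa M \<mu> \<Longrightarrow> pos_fa M \<nu> \<Longrightarrow> E \<in> sets M \<Longrightarrow> fa_meet M \<mu> \<nu> E \<le> \<nu> E"
  using meet_lower[of M \<mu> \<nu> E "{}"] fa_empty[of M \<mu>] by simp

lemma meet_approx:
  assumes "pos_fa M \<mu>" "pos_fa M \<nu>" "E \<in> sets M" "0 < e"
  shows "\<exists>C\<in>sets M. C \<subseteq> E \<and> \<mu> C + \<nu> (E - C) < fa_meet M \<mu> \<nu> E + e"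
proof (rule ccontr)
  assume "\<not> ?thesis"
  then have "fa_meet M \<mu> \<nu> E + e \<le> fa_meet M \<mu> \<nu> E"
    by (intro meet_greatest) (auto simp: not_less)
  then show False using assms by simp
qed

lemma meet_fa:
  assumes mu: "pos_fa M \<mu>" and nu: "pos_fa M \<nu>"
  shows "pos_fa M (fa_meet M \<mu> \<nu>)"
  unfolding pos_fa_def
proof (intro conjI ballI impI)
  show "fa_meet M \<mu> \<nu> {} = 0"
    using meet_le1[OF mu nu, of "{}"] meet_nonneg[OF mu nu, of "{}"] fa_empty[OF mu] by simp
  show "0 \<le> fa_meet M \<mu> \<nu> E" if "E \<in> sets M" for E using meet_nonneg[OF mu nu that] .
  fix A B assume A: "A \<in> sets M" and B: "B \<in> sets M" and AB: "A \<inter> B = {}"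
  have AuB: "A \<union> B \<in> sets M" using A B by auto
  show "fa_meet M \<mu> \<nu> (A \<union> B) = fa_meet M \<mu> \<nu> A + fa_meet M \<mu> \<nu> B"
  proof (rule antisym)
    have key: "fa_meet M \<mu> \<nu> (A \<union> B) \<le> \<mu> C1 + \<nu> (A - C1) + (\<mu> C2 + \<nu> (B - C2))"
      if "C1 \<in> sets M" "C1 \<subseteq> A" "C2 \<in> sets M" "C2 \<subseteq> B" for C1 C2
    proof -
      have "fa_meet M \<mu> \<nu> (A \<union> B) \<le> \<mu> (C1 \<union> C2) + \<nu> (A \<union> B - (C1 \<union> C2))"
        by (rule meet_lower[OF mu nu AuB]) (use that in auto)
      moreover have "\<mu> (C1 \<union> C2) = \<mu> C1 + \<mu> C2"
        by (rule fa_union[OF mu]) (use that AB in auto)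
      moreover have "A \<union> B - (C1 \<union> C2) = (A - C1) \<union> (B - C2)" using that AB by auto
      moreover have "\<nu> ((A - C1) \<union> (B - C2)) = \<nu> (A - C1) + \<nu> (B - C2)"
        by (rule fa_union[OF nu]) (use that AB A B in auto)
      ultimately show ?thesis by simp
    qed
    have step: "fa_meet M \<mu> \<nu> (A \<union> B) - (\<mu> C2 + \<nu> (B - C2)) \<le> fa_meet M \<mu> \<nu> A"
      if "C2 \<in> sets M" "C2 \<subseteq> B" for C2
    proof (rule meet_greatest)
      fix C1 assume "C1 \<in> sets M" "C1 \<subseteq> A"
      then show "fa_meet M \<mu> \<nu> (A \<union> B) - (\<mu> C2 + \<nu> (B - C2)) \<le> \<mu> C1 + \<nu> (A - C1)"
        using key[of C1 C2] that by linarith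
    qed
    have "fa_meet M \<mu> \<nu> (A \<union> B) - fa_meet M \<mu> \<nu> A \<le> fa_meet M \<mu> \<nu> B"
    proof (rule meet_greatest)
      fix C2 assume "C2 \<in> sets M" "C2 \<subseteq> B"
      then have "fa_meet M \<mu> \<nu> (A \<union> B) - (\<mu> C2 + \<nu> (B - C2)) \<le> fa_meet M \<mu> \<nu> A" using step by blast
      then show "fa_meet M \<mu> \<nu> (A \<union> B) - fa_meet M \<mu> \<nu> A \<le> \<mu> C2 + \<nu> (B - C2)" by linarith
    qed
    then show "fa_meet M \<mu> \<nu> (A \<union> B) \<le> fa_meet M \<mu> \<nu> A + fa_meet M \<mu> \<nu> B" by simp
  next
    show "fa_meet M \<mu> \<nu> A + fa_meet M \<mu> \<nu> B \<le> fa_meet M \<mu> \<nu> (A \<union> B)"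
    proof (rule meet_greatest)
      fix C assume C: "C \<in> sets M" "C \<subseteq> A \<union> B"
      have "fa_meet M \<mu> \<nu> A \<le> \<mu> (C \<inter> A) + \<nu> (A - C \<inter> A)"
        by (rule meet_lower[OF mu nu A]) (use C A in auto)
      moreover have "fa_meet M \<mu> \<nu> B \<le> \<mu> (C \<inter> B) + \<nu> (B - C \<inter> B)"
        by (rule meet_lower[OF mu nu B]) (use C B in auto)
      moreover have "\<mu> C = \<mu> (C \<inter> A) + \<mu> (C \<inter> B)"
      proof -
        have eq: "(C \<inter> A) \<union> (C \<inter> B) = C" using C by auto
        have "\<mu> ((C \<inter> A) \<union> (C \<inter> B)) = \<mu> (C \<inter> A) + \<mu> (C \<inter> B)"
          by (rule fa_union[OF mu]) (use C A B AB in auto)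
        then show ?thesis unfolding eq .
      qed
      moreover have "\<nu> (A \<union> B - C) = \<nu> (A - C \<inter> A) + \<nu> (B - C \<inter> B)"
      proof -
        have eq: "(A - C \<inter> A) \<union> (B - C \<inter> B) = A \<union> B - C" by auto
        have "\<nu> ((A - C \<inter> A) \<union> (B - C \<inter> B)) = \<nu> (A - C \<inter> A) + \<nu> (B - C \<inter> B)"
          by (rule fa_union[OF nu]) (use C A B AB in auto)
        then show ?thesis unfolding eq .
      qed
      ultimately show "fa_meet M \<mu> \<nu> A + fa_meet M \<mu> \<nu> B \<le> \<mu> C + \<nu> (A \<union> B - C)" by linarith
    qed
  qed
qed

lemma ca_fa: "pos_ca M \<nu> \<Longrightarrow> pos_fa M \<nu>" unfolding pos_ca_def by simp
lemma pfa_fa: "pos_pfa M \<nu> \<Longrightarrow> pos_fa M \<nu>" unfolding pos_pfa_def by simp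

lemma pfa_zero:
  assumes "pos_pfa M \<rho>" "pos_ca M \<kappa>" "\<forall>E\<in>sets M. \<kappa> E \<le> \<rho> E" "E \<in> sets M"
  shows "\<kappa> E = 0"
proof -
  have "\<forall>\<nu>. pos_ca M \<nu> \<and> (\<forall>E\<in>sets M. \<nu> E \<le> \<rho> E) \<longrightarrow> (\<forall>E\<in>sets M. \<nu> E = 0)"
    using assms(1) unfolding pos_pfa_def by simp
  then have "\<forall>E\<in>sets M. \<kappa> E = 0" using assms(2,3) by simp
  then show ?thesis using assms(4) by simp
qed

lemma ca_pfa_meet:
  assumes l: "pos_ca M la" and r: "pos_pfa M \<rho>" and E: "E \<in> sets M"
  shows "fa_meet M la \<rho> E = 0"
proof -
  have lf: "pos_fa M la" using ca_fa[OF l] .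
  have rf: "pos_fa M \<rho>" using pfa_fa[OF r] .
  have kf: "pos_fa M (fa_meet M la \<rho>)" by (rule meet_fa[OF lf rf])
  have kc: "pos_ca M (fa_meet M la \<rho>)"
    by (rule dom_ca[OF kf l]) (simp add: meet_le1[OF lf rf])
  show ?thesis
    by (rule pfa_zero[OF r kc _ E]) (simp add: meet_le2[OF lf rf])
qed

lemma lemmaY:
  assumes l: "pos_ca M la" and r1: "pos_pfa M r1" and r2: "pos_fa M r2"
    and le: "\<forall>E\<in>sets M. la E \<le> r1 E + r2 E" and E: "E \<in> sets M"
  shows "la E \<le> r2 E"
proof (rule field_le_epsilon)
  fix e :: real assume e: "0 < e"
  have lf: "pos_fa M la" using ca_fa[OF l] .
  have rf: "pos_fa M r1" using pfa_fa[OF r1] .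
  obtain C where C: "C \<in> sets M" "C \<subseteq> E" and Ce: "la C + r1 (E - C) < fa_meet M la r1 E + e"
    using meet_approx[OF lf rf E e] by blast
  have m0: "fa_meet M la r1 E = 0" by (rule ca_pfa_meet[OF l r1 E])
  have EC: "E - C \<in> sets M" using C E by blast
  have "la E = la C + la (E - C)" using fa_diff[OF lf C(1) E C(2)] by simp
  moreover have "la (E - C) \<le> r1 (E - C) + r2 (E - C)" using le EC by simp
  moreover have "r2 (E - C) \<le> r2 E" by (rule fa_mono[OF r2 EC E]) auto
  ultimately show "la E \<le> r2 E + e" using Ce m0 by linarith
qed

lemma sum_fa:
  assumes "finite I" "\<forall>k\<in>I. pos_fa M (\<rho> k)"
  shows "pos_fa M (\<lambda>E. \<Sum>k\<in>I. \<rho> k E)"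
  unfolding pos_fa_def
proof (intro conjI ballI impI)
  show "(\<Sum>k\<in>I. \<rho> k {}) = 0" using assms(2) fa_empty by (metis (no_types, lifting) sum.neutral)
  show "0 \<le> (\<Sum>k\<in>I. \<rho> k E)" if "E \<in> sets M" for E
    using assms(2) fa_nonneg that by (metis sum_nonneg)
  fix A B assume "A \<in> sets M" "B \<in> sets M" "A \<inter> B = {}"
  then have "\<rho> k (A \<union> B) = \<rho> k A + \<rho> k B" if "k \<in> I" for k
    using fa_union[of M "\<rho> k" A B] assms(2) that by simp
  then show "(\<Sum>k\<in>I. \<rho> k (A \<union> B)) = (\<Sum>k\<in>I. \<rho> k A) + (\<Sum>k\<in>I. \<rho> k B)"
    by (simp add: sum.distrib)
qed

lemma scale_fa:
  assumes "pos_fa M \<rho>" "0 \<le> c"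
  shows "pos_fa M (\<lambda>E. \<rho> E / c)"
  using assms unfolding pos_fa_def by (simp add: add_divide_distrib)

lemma scale_fa2:
  assumes "pos_fa M \<rho>" "0 \<le> c"
  shows "pos_fa M (\<lambda>E. c * \<rho> E)"
  using assms unfolding pos_fa_def by (simp add: distrib_left)

lemma sum_ca:
  assumes "finite I" "\<forall>k\<in>I. pos_ca M (\<rho> k)"
  shows "pos_ca M (\<lambda>E. \<Sum>k\<in>I. \<rho> k E)"
  unfolding pos_ca_def count_add_def
proof (intro conjI allI impI)
  show "pos_fa M (\<lambda>E. \<Sum>k\<in>I. \<rho> k E)" using sum_fa[OF assms(1)] assms(2) ca_fa by blast
  fix F :: "nat \<Rightarrow> _" assume F: "range F \<subseteq> sets M" "disjoint_family F"
  show "(\<lambda>n. \<Sum>k\<in>I. \<rho> k (F n)) sums (\<Sum>k\<in>I. \<rho> k (\<Union>n. F n))"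
    by (rule sums_sum) (use ca_sums[OF _ F] assms(2) in simp)
qed

lemma scale_ca:
  assumes "pos_ca M \<rho>" "0 \<le> c"
  shows "pos_ca M (\<lambda>E. \<rho> E / c)"
  unfolding pos_ca_def count_add_def
proof (intro conjI allI impI)
  show "pos_fa M (\<lambda>E. \<rho> E / c)" using scale_fa[OF ca_fa[OF assms(1)] assms(2)] .
  fix F :: "nat \<Rightarrow> _" assume F: "range F \<subseteq> sets M" "disjoint_family F"
  show "(\<lambda>n. \<rho> (F n) / c) sums (\<rho> (\<Union>n. F n) / c)"
    by (rule sums_divide) (rule ca_sums[OF assms(1) F])
qed

lemma scale_ca2:
  assumes "pos_ca M \<rho>" "0 \<le> c"
  shows "pos_ca M (\<lambda>E. c * \<rho> E)"
  unfolding pos_ca_def count_add_def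
proof (intro conjI allI impI)
  show "pos_fa M (\<lambda>E. c * \<rho> E)" using scale_fa2[OF ca_fa[OF assms(1)] assms(2)] .
  fix F :: "nat \<Rightarrow> _" assume F: "range F \<subseteq> sets M" "disjoint_family F"
  show "(\<lambda>n. c * \<rho> (F n)) sums (c * \<rho> (\<Union>n. F n))"
    by (rule sums_mult) (rule ca_sums[OF assms(1) F])
qed

lemma sum_pfa_zero:
  fixes n :: nat
  assumes l: "pos_ca M la" and r: "\<forall>k<n. pos_pfa M (\<rho> k)"
    and le: "\<forall>E\<in>sets M. la E \<le> (\<Sum>k<n. \<rho> k E)" and E: "E \<in> sets M"
  shows "la E = 0"
  using r le
proof (induction n)
  case 0
  then have "la E \<le> 0" using E by simp
  moreover have "0 \<le> la E" using fa_nonneg[OF ca_fa[OF l] E] .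
  ultimately show ?case by simp
next
  case (Suc n)
  have s: "pos_fa M (\<lambda>E. \<Sum>k<n. \<rho> k E)"
    by (rule sum_fa) (use Suc.prems(1) in \<open>auto intro: pfa_fa\<close>)
  have le2: "\<forall>E\<in>sets M. la E \<le> \<rho> n E + (\<Sum>k<n. \<rho> k E)"
    using Suc.prems(2) by (simp add: add.commute)
  have pn: "pos_pfa M (\<rho> n)" using Suc.prems(1) by simp
  have "\<forall>E\<in>sets M. la E \<le> (\<Sum>k<n. \<rho> k E)"
    using lemmaY[OF l pn s le2] by blast
  then show ?case using Suc.IH Suc.prems(1) by simp
qed

lemma meet_mono:
  assumes "pos_fa M a" "pos_fa M b" "pos_fa M a'" "pos_fa M b'"
    "\<forall>E\<in>sets M. a E \<le> a' E" "\<forall>E\<in>sets M. b E \<le> b' E" "E \<in> sets M"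
  shows "fa_meet M a b E \<le> fa_meet M a' b' E"
proof (rule meet_greatest)
  fix C assume C: "C \<in> sets M" "C \<subseteq> E"
  have EC: "E - C \<in> sets M" using C assms(7) by blast
  have "fa_meet M a b E \<le> a C + b (E - C)" by (rule meet_lower[OF assms(1,2,7) C])
  also have "\<dots> \<le> a' C + b' (E - C)" using assms(5,6) C EC by (simp add: add_mono)
  finally show "fa_meet M a b E \<le> a' C + b' (E - C)" .
qed

definition lsum :: "'a measure \<Rightarrow> ('a set \<Rightarrow> real) \<Rightarrow> ('a \<Rightarrow> real) \<Rightarrow> 'a set set \<Rightarrow> real" where
  "lsum M \<nu> f P = (\<Sum>B\<in>P. (INF x\<in>B. f x) * \<nu> B)"

lemma fi_eq: "fa_integral M \<nu> f = Sup ((\<lambda>P. lsum M \<nu> f P) ` {P. meas_partition M P})"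
  unfolding fa_integral_def lsum_def by (rule arg_cong[where f=Sup]) auto

lemma part_props:
  assumes "meas_partition M P" "B \<in> P"
  shows "B \<in> sets M" "B \<noteq> {}" "B \<subseteq> space M"
  using assms unfolding meas_partition_def by (auto dest: sets.sets_into_space)

lemma part_finite: "meas_partition M P \<Longrightarrow> finite P"
  unfolding meas_partition_def by simp

lemma part_union: "meas_partition M P \<Longrightarrow> \<Union>P = space M"
  unfolding meas_partition_def by simp

lemma part_disj:
  assumes "meas_partition M P" "B \<in> P" "C \<in> P" "B \<noteq> C" shows "B \<inter> C = {}"
proof -
  have "disjoint P" using assms(1) unfolding meas_partition_def by simp
  then show ?thesis using assms(2-4) unfolding disjoint_def pairwise_def disjnt_def by simp
qed

lemma part_space: "space M \<noteq> {} \<Longrightarrow> meas_partition M {space M}"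
  unfolding meas_partition_def by (auto simp: disjoint_def)

lemma inf_props:
  fixes f :: "'a \<Rightarrow> real"
  assumes f01: "\<forall>x\<in>space M. 0 \<le> f x \<and> f x \<le> 1" and B: "B \<noteq> {}" "B \<subseteq> space M"
  shows "0 \<le> (INF x\<in>B. f x)" and "\<And>x. x \<in> B \<Longrightarrow> (INF x\<in>B. f x) \<le> f x" and "(INF x\<in>B. f x) \<le> 1"
proof -
  have bdd: "bdd_below (f ` B)" by (rule bdd_belowI[where m=0]) (use f01 B in auto)
  show "0 \<le> (INF x\<in>B. f x)" by (rule cINF_greatest[OF B(1)]) (use f01 B in auto)
  show le: "(INF x\<in>B. f x) \<le> f x" if "x \<in> B" for x by (rule cINF_lower[OF bdd that])
  obtain x where "x \<in> B" using B by blast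
  then show "(INF x\<in>B. f x) \<le> 1" using le[of x] f01 B by force
qed

lemma part_sum_sub:
  assumes nu: "pos_fa M \<nu>" and Q: "meas_partition M Q" and B: "B \<in> sets M"
  shows "\<nu> B = (\<Sum>C\<in>Q. \<nu> (B \<inter> C))"
proof -
  have "(\<Union>C\<in>Q. B \<inter> C) = B"
    using part_union[OF Q] sets.sets_into_space[OF B] by auto
  moreover have "\<forall>C\<in>Q. B \<inter> C \<in> sets M" using part_props(1)[OF Q] B by blast
  moreover have "disjoint_family_on (\<lambda>C. B \<inter> C) Q"
    unfolding disjoint_family_on_def using part_disj[OF Q] by blast
  ultimately show ?thesis using fa_sum[OF nu part_finite[OF Q], of "\<lambda>C. B \<inter> C"] by simp
qed

lemma part_sum:
  assumes nu: "pos_fa M \<nu>" and P: "meas_partition M P"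
  shows "(\<Sum>B\<in>P. \<nu> B) = \<nu> (space M)"
proof -
  have "\<forall>B\<in>P. B \<in> sets M" using part_props(1)[OF P] by blast
  moreover have "disjoint_family_on (\<lambda>B. B) P"
    unfolding disjoint_family_on_def using part_disj[OF P] by blast
  ultimately show ?thesis using fa_sum[OF nu part_finite[OF P], of "\<lambda>B. B"] part_union[OF P] by simp
qed

lemma lsum_le:
  assumes nu: "pos_fa M \<nu>" and P: "meas_partition M P" and f01: "\<forall>x\<in>space M. 0 \<le> f x \<and> f x \<le> 1"
  shows "lsum M \<nu> f P \<le> \<nu> (space M)"
proof -
  have "lsum M \<nu> f P \<le> (\<Sum>B\<in>P. \<nu> B)"
    unfolding lsum_def
  proof (rule sum_mono)
    fix B assume B: "B \<in> P"
    have "(INF x\<in>B. f x) \<le> 1" using inf_props(3)[OF f01 part_props(2,3)[OF P B]] .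
    moreover have "0 \<le> \<nu> B" using fa_nonneg[OF nu part_props(1)[OF P B]] .
    ultimately show "(INF x\<in>B. f x) * \<nu> B \<le> \<nu> B" using mult_right_mono[of "INF x\<in>B. f x" 1 "\<nu> B"] by simp
  qed
  then show ?thesis using part_sum[OF nu P] by simp
qed

lemma fi_bdd:
  assumes nu: "pos_fa M \<nu>" and f01: "\<forall>x\<in>space M. 0 \<le> f x \<and> f x \<le> 1"
  shows "bdd_above ((\<lambda>P. lsum M \<nu> f P) ` {P. meas_partition M P})"
  by (rule bdd_aboveI[where M="\<nu> (space M)"]) (use lsum_le[OF nu _ f01] in auto)

lemma fi_ne: "space M \<noteq> {} \<Longrightarrow> (\<lambda>P. lsum M \<nu> f P) ` {P. meas_partition M P} \<noteq> {}"
proof -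
  assume ne: "space M \<noteq> {}"
  have "{space M} \<in> {P. meas_partition M P}" using part_space[OF ne] by simp
  then show ?thesis by (metis empty_iff image_is_empty)
qed

lemma fi_upper:
  assumes nu: "pos_fa M \<nu>" and f01: "\<forall>x\<in>space M. 0 \<le> f x \<and> f x \<le> 1" and P: "meas_partition M P"
  shows "lsum M \<nu> f P \<le> fa_integral M \<nu> f"
  unfolding fi_eq by (rule cSup_upper[OF _ fi_bdd[OF nu f01]]) (use P in auto)

lemma fi_least:
  assumes ne: "space M \<noteq> {}" and "\<And>P. meas_partition M P \<Longrightarrow> lsum M \<nu> f P \<le> c"
  shows "fa_integral M \<nu> f \<le> c"
  unfolding fi_eq by (rule cSup_least[OF fi_ne[OF ne]]) (use assms(2) in auto)

lemma fi_mono: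
  assumes ne: "space M \<noteq> {}" and nu1: "pos_fa M \<nu>1" and nu2: "pos_fa M \<nu>2"
    and le: "\<forall>E\<in>sets M. \<nu>1 E \<le> \<nu>2 E" and f01: "\<forall>x\<in>space M. 0 \<le> f x \<and> f x \<le> 1"
  shows "fa_integral M \<nu>1 f \<le> fa_integral M \<nu>2 f"
proof (rule fi_least[OF ne])
  fix P assume P: "meas_partition M P"
  have "lsum M \<nu>1 f P \<le> lsum M \<nu>2 f P"
    unfolding lsum_def
  proof (rule sum_mono)
    fix B assume B: "B \<in> P"
    show "(INF x\<in>B. f x) * \<nu>1 B \<le> (INF x\<in>B. f x) * \<nu>2 B"
      by (rule mult_left_mono) (use inf_props(1)[OF f01 part_props(2,3)[OF P B]] le part_props(1)[OF P B] in auto)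
  qed
  also have "\<dots> \<le> fa_integral M \<nu>2 f" by (rule fi_upper[OF nu2 f01 P])
  finally show "lsum M \<nu>1 f P \<le> fa_integral M \<nu>2 f" .
qed

lemma fi_subadd:
  assumes ne: "space M \<noteq> {}" and nu1: "pos_fa M \<nu>1" and nu2: "pos_fa M \<nu>2"
    and eq: "\<forall>E\<in>sets M. \<nu> E = \<nu>1 E + \<nu>2 E" and f01: "\<forall>x\<in>space M. 0 \<le> f x \<and> f x \<le> 1"
  shows "fa_integral M \<nu> f \<le> fa_integral M \<nu>1 f + fa_integral M \<nu>2 f"
proof (rule fi_least[OF ne])
  fix P assume P: "meas_partition M P"
  have "lsum M \<nu> f P = lsum M \<nu>1 f P + lsum M \<nu>2 f P"
    unfolding lsum_def sum.distrib[symmetric]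
    by (rule sum.cong) (use eq part_props(1)[OF P] in \<open>auto simp: distrib_left\<close>)
  also have "\<dots> \<le> fa_integral M \<nu>1 f + fa_integral M \<nu>2 f"
    by (rule add_mono fi_upper[OF nu1 f01 P] fi_upper[OF nu2 f01 P])+
  finally show "lsum M \<nu> f P \<le> fa_integral M \<nu>1 f + fa_integral M \<nu>2 f" .
qed

lemma fi_one:
  assumes ne: "space M \<noteq> {}" and nu: "pos_fa M \<nu>" and f1: "\<forall>x\<in>space M. f x = 1"
  shows "fa_integral M \<nu> f = \<nu> (space M)"
proof -
  have f01: "\<forall>x\<in>space M. 0 \<le> f x \<and> f x \<le> 1" using f1 by simp
  have ls: "lsum M \<nu> f P = \<nu> (space M)" if P: "meas_partition M P" for P
  proof -
    have "lsum M \<nu> f P = (\<Sum>B\<in>P. \<nu> B)"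
      unfolding lsum_def
    proof (rule sum.cong[OF refl])
      fix B assume B: "B \<in> P"
      have "(INF x\<in>B. f x) = (INF x\<in>B. (1::real))"
        by (rule INF_cong[OF refl]) (use f1 part_props(3)[OF P B] in auto)
      then show "(INF x\<in>B. f x) * \<nu> B = \<nu> B" using part_props(2)[OF P B] by simp
    qed
    then show ?thesis using part_sum[OF nu P] by simp
  qed
  show ?thesis
  proof (rule antisym)
    show "fa_integral M \<nu> f \<le> \<nu> (space M)" by (rule fi_least[OF ne]) (simp add: ls)
    show "\<nu> (space M) \<le> fa_integral M \<nu> f"
      using fi_upper[OF nu f01 part_space[OF ne]] ls[OF part_space[OF ne]] by simp
  qed
qed

lemma lsum_pair:
  assumes nu: "pos_fa M \<nu>" and P: "meas_partition M P" and Q: "meas_partition M Q"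
    and f01: "\<forall>x\<in>space M. 0 \<le> f x \<and> f x \<le> 1" and g01: "\<forall>x\<in>space M. 0 \<le> g x \<and> g x \<le> 1"
    and fg: "\<forall>x\<in>space M. f x + g x \<le> 1"
  shows "lsum M \<nu> f P + lsum M \<nu> g Q \<le> \<nu> (space M)"
proof -
  let ?a = "\<lambda>B. INF x\<in>B. f x" and ?b = "\<lambda>C. INF x\<in>C. g x"
  have "lsum M \<nu> f P = (\<Sum>B\<in>P. \<Sum>C\<in>Q. ?a B * \<nu> (B \<inter> C))"
    unfolding lsum_def
    by (rule sum.cong[OF refl]) (simp add: part_sum_sub[OF nu Q part_props(1)[OF P]] sum_distrib_left)
  moreover have "lsum M \<nu> g Q = (\<Sum>B\<in>P. \<Sum>C\<in>Q. ?b C * \<nu> (B \<inter> C))"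
  proof -
    have "lsum M \<nu> g Q = (\<Sum>C\<in>Q. \<Sum>B\<in>P. ?b C * \<nu> (B \<inter> C))"
      unfolding lsum_def
      by (rule sum.cong[OF refl]) (simp add: part_sum_sub[OF nu P part_props(1)[OF Q]] sum_distrib_left Int_commute)
    then show ?thesis by (simp add: sum.swap[of _ Q P])
  qed
  moreover have "(\<Sum>B\<in>P. \<Sum>C\<in>Q. ?a B * \<nu> (B \<inter> C)) + (\<Sum>B\<in>P. \<Sum>C\<in>Q. ?b C * \<nu> (B \<inter> C))
      \<le> (\<Sum>B\<in>P. \<Sum>C\<in>Q. \<nu> (B \<inter> C))"
    unfolding sum.distrib[symmetric]
  proof (intro sum_mono)
    fix B C assume B: "B \<in> P" and C: "C \<in> Q"
    have BC: "B \<inter> C \<in> sets M" using part_props(1)[OF P B] part_props(1)[OF Q C] by blast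
    show "?a B * \<nu> (B \<inter> C) + ?b C * \<nu> (B \<inter> C) \<le> \<nu> (B \<inter> C)"
    proof (cases "B \<inter> C = {}")
      case True
      then show ?thesis using fa_empty[OF nu] by simp
    next
      case False
      then obtain x where x: "x \<in> B" "x \<in> C" by blast
      have "?a B \<le> f x" by (rule inf_props(2)[OF f01 part_props(2,3)[OF P B] x(1)])
      moreover have "?b C \<le> g x" by (rule inf_props(2)[OF g01 part_props(2,3)[OF Q C] x(2)])
      moreover have "x \<in> space M" using part_props(3)[OF P B] x by blast
      ultimately have "?a B + ?b C \<le> 1" using fg by force
      then have "(?a B + ?b C) * \<nu> (B \<inter> C) \<le> \<nu> (B \<inter> C)"
        using fa_nonneg[OF nu BC] mult_right_mono[of "?a B + ?b C" 1 "\<nu> (B \<inter> C)"] by simp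
      then show ?thesis by (simp add: distrib_right)
    qed
  qed
  moreover have "(\<Sum>B\<in>P. \<Sum>C\<in>Q. \<nu> (B \<inter> C)) = \<nu> (space M)"
    using part_sum_sub[OF nu Q part_props(1)[OF P]] part_sum[OF nu P] by simp
  ultimately show ?thesis by linarith
qed

lemma fi_pair:
  assumes ne: "space M \<noteq> {}" and nu: "pos_fa M \<nu>"
    and f01: "\<forall>x\<in>space M. 0 \<le> f x \<and> f x \<le> 1" and g01: "\<forall>x\<in>space M. 0 \<le> g x \<and> g x \<le> 1"
    and fg: "\<forall>x\<in>space M. f x + g x \<le> 1"
  shows "fa_integral M \<nu> f + fa_integral M \<nu> g \<le> \<nu> (space M)"
proof -
  have "fa_integral M \<nu> g \<le> \<nu> (space M) - fa_integral M \<nu> f"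
  proof (rule fi_least[OF ne])
    fix Q assume Q: "meas_partition M Q"
    have "fa_integral M \<nu> f \<le> \<nu> (space M) - lsum M \<nu> g Q"
    proof (rule fi_least[OF ne])
      fix P assume P: "meas_partition M P"
      show "lsum M \<nu> f P \<le> \<nu> (space M) - lsum M \<nu> g Q"
        using lsum_pair[OF nu P Q f01 g01 fg] by simp
    qed
    then show "lsum M \<nu> g Q \<le> \<nu> (space M) - fa_integral M \<nu> f" by simp
  qed
  then show ?thesis by simp
qed

definition mk :: "'a measure \<Rightarrow> ('a set \<Rightarrow> real) \<Rightarrow> 'a measure" where
  "mk M \<nu> = measure_of (space M) (sets M) (\<lambda>E. ennreal (\<nu> E))"

lemma mk_sets[simp]: "sets (mk M \<nu>) = sets M"
  unfolding mk_def by (rule sets.sets_measure_of_eq)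

lemma mk_space[simp]: "space (mk M \<nu>) = space M"
  unfolding mk_def by (rule sets.space_measure_of_eq)

lemma mk_emeasure:
  assumes nu: "pos_ca M \<nu>" and E: "E \<in> sets M"
  shows "emeasure (mk M \<nu>) E = ennreal (\<nu> E)"
  unfolding mk_def
proof (rule emeasure_measure_of_sigma[OF sets.sigma_algebra_axioms _ _ E])
  show "positive (sets M) (\<lambda>E. ennreal (\<nu> E))"
    unfolding positive_def using fa_empty[OF ca_fa[OF nu]] by simp
  show "countably_additive (sets M) (\<lambda>E. ennreal (\<nu> E))"
    unfolding countably_additive_def
  proof (intro allI impI)
    fix A :: "nat \<Rightarrow> _" assume A: "range A \<subseteq> sets M" "disjoint_family A" "\<Union> (range A) \<in> sets M"
    have s: "(\<lambda>n. \<nu> (A n)) sums \<nu> (\<Union>n. A n)" by (rule ca_sums[OF nu A(1,2)])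
    have "(\<Sum>i. ennreal (\<nu> (A i))) = ennreal (\<Sum>i. \<nu> (A i))"
      by (rule suminf_ennreal2) (use fa_nonneg[OF ca_fa[OF nu]] A(1) s in \<open>auto simp: sums_iff\<close>)
    then show "(\<Sum>i. ennreal (\<nu> (A i))) = ennreal (\<nu> (\<Union> (range A)))"
      using s by (simp add: sums_iff)
  qed
qed

lemma mk_measure:
  assumes nu: "pos_ca M \<nu>" and E: "E \<in> sets M"
  shows "Sigma_Algebra.measure (mk M \<nu>) E = \<nu> E"
  unfolding measure_def using mk_emeasure[OF nu E] fa_nonneg[OF ca_fa[OF nu] E] by simp

lemma mk_finite:
  assumes nu: "pos_ca M \<nu>"
  shows "finite_measure (mk M \<nu>)"
  by (rule finite_measureI) (simp add: mk_emeasure[OF nu sets.top])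

lemma mk_meas: "borel_measurable (mk M \<nu>) = borel_measurable M"
  by (rule measurable_cong_sets) simp_all

lemma mk_int:
  fixes f :: "'a \<Rightarrow> real"
  assumes nu: "pos_ca M \<nu>" and f: "f \<in> borel_measurable M" and b: "\<forall>x\<in>space M. \<bar>f x\<bar> \<le> c"
  shows "integrable (mk M \<nu>) f"
  by (rule finite_measure.integrable_const_bound[OF mk_finite[OF nu], where B=c])
     (use b f mk_meas in auto)

lemma lsum_le_int:
  fixes f :: "'a \<Rightarrow> real"
  assumes nu: "pos_ca M \<nu>" and P: "meas_partition M P" and f: "f \<in> borel_measurable M"
    and f01: "\<forall>x\<in>space M. 0 \<le> f x \<and> f x \<le> 1"
  shows "lsum M \<nu> f P \<le> integral\<^sup>L (mk M \<nu>) f"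
proof -
  let ?N = "mk M \<nu>"
  let ?a = "\<lambda>B. INF x\<in>B. f x"
  have a01: "0 \<le> ?a B \<and> ?a B \<le> 1" if "B \<in> P" for B
    using inf_props(1,3)[OF f01 part_props(2,3)[OF P that]] by simp
  have meas: "(\<lambda>x. ?a B * indicator B x) \<in> borel_measurable M" if "B \<in> P" for B
    using part_props(1)[OF P that] by measurable
  have intB: "integrable ?N (\<lambda>x. ?a B * indicator B x)" if "B \<in> P" for B
    by (rule mk_int[OF nu meas[OF that], where c=1]) (use a01[OF that] in \<open>auto simp: indicator_def\<close>)
  have "lsum M \<nu> f P = (\<Sum>B\<in>P. integral\<^sup>L ?N (\<lambda>x. ?a B * indicator B x))"
    unfolding lsum_def
  proof (rule sum.cong[OF refl])
    fix B assume B: "B \<in> P"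
    have e: "B \<inter> space M = B" using part_props(3)[OF P B] by auto
    show "?a B * \<nu> B = integral\<^sup>L ?N (\<lambda>x. ?a B * indicator B x)"
      unfolding integral_mult_right_zero integral_indicator mk_space e
      using mk_measure[OF nu part_props(1)[OF P B]] e by simp
  qed
  also have "\<dots> = integral\<^sup>L ?N (\<lambda>x. \<Sum>B\<in>P. ?a B * indicator B x)"
    using Bochner_Integration.integral_sum[where I=P and M="?N" and f="\<lambda>B x. ?a B * indicator B x"] intB by simp
  also have "\<dots> \<le> integral\<^sup>L ?N f"
  proof (rule integral_mono)
    show "integrable ?N (\<lambda>x. \<Sum>B\<in>P. ?a B * indicator B x)"
        by (rule Bochner_Integration.integrable_sum[where f="\<lambda>B x. ?a B * indicator B x"]) (rule intB)
    show "integrable ?N f" by (rule mk_int[OF nu f, where c=1]) (use f01 in auto)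
    fix x assume "x \<in> space ?N"
    then have x: "x \<in> space M" by simp
    then obtain B0 where B0: "B0 \<in> P" "x \<in> B0" using part_union[OF P] by blast
    have "(\<Sum>B\<in>P. ?a B * indicator B x) = (\<Sum>B\<in>P. if B = B0 then ?a B0 else 0)"
    proof (rule sum.cong[OF refl])
      fix B assume B: "B \<in> P"
      show "?a B * indicator B x = (if B = B0 then ?a B0 else 0)"
      proof (cases "B = B0")
        case True then show ?thesis using B0 by simp
      next
        case False
        then have "x \<notin> B" using part_disj[OF P B B0(1)] B0(2) by blast
        then show ?thesis using False by simp
      qed
    qed
    also have "\<dots> = ?a B0" using B0(1) part_finite[OF P] by simp
    also have "\<dots> \<le> f x" by (rule inf_props(2)[OF f01 part_props(2,3)[OF P B0(1)] B0(2)])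
    finally show "(\<Sum>B\<in>P. ?a B * indicator B x) \<le> f x" .
  qed
  finally show ?thesis .
qed

lemma int_le_lsum:
  fixes f :: "'a \<Rightarrow> real" and n :: nat
  assumes nu: "pos_ca M \<nu>" and f: "f \<in> borel_measurable M"
    and f01: "\<forall>x\<in>space M. 0 \<le> f x \<and> f x \<le> 1" and n: "0 < n"
  shows "\<exists>P. meas_partition M P \<and> integral\<^sup>L (mk M \<nu>) f \<le> lsum M \<nu> f P + \<nu> (space M) / real n"
proof -
  let ?N = "mk M \<nu>"
  have nf: "pos_fa M \<nu>" using ca_fa[OF nu] .
  define r where "r = real n"
  have r: "0 < r" using n r_def by simp
  define g where "g x = nat \<lfloor>r * f x\<rfloor>" for x
  define Bk where "Bk k = {x\<in>space M. g x = k}" for k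
  have Bk_sets: "Bk k \<in> sets M" for k
    unfolding Bk_def g_def using f by measurable
  have g_props: "real (g x) \<le> r * f x \<and> r * f x < real (g x) + 1 \<and> g x \<le> n" if x: "x \<in> space M" for x
  proof -
    have "0 \<le> r * f x" using f01 x r by simp
    moreover have "r * f x \<le> r" using f01 x r by (simp add: mult_left_le_one_le)
    ultimately show ?thesis unfolding g_def r_def by linarith
  qed
  have Bk_disj: "Bk i \<inter> Bk j = {}" if "i \<noteq> j" for i j using that unfolding Bk_def by auto
  have Bk_cover: "x \<in> Bk (g x)" if "x \<in> space M" for x using that unfolding Bk_def by simp
  define K where "K = {k\<in>{..n}. Bk k \<noteq> {}}"
  define P where "P = Bk ` K"
  have injK: "inj_on Bk K"
  proof (rule inj_onI)
    fix i j assume "i \<in> K" "j \<in> K" "Bk i = Bk j"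
    then show "i = j" using Bk_disj[of i j] unfolding K_def by auto
  qed
  have P: "meas_partition M P"
    unfolding meas_partition_def
  proof (intro conjI)
    show "finite P" unfolding P_def K_def by simp
    show "P \<subseteq> sets M" unfolding P_def using Bk_sets by auto
    show "{} \<notin> P" unfolding P_def K_def by auto
    show "disjoint P" unfolding disjoint_def pairwise_def disjnt_def P_def
    proof (intro ballI impI)
      fix X Y assume X: "X \<in> Bk ` K" and Y: "Y \<in> Bk ` K" and XY: "X \<noteq> Y"
      obtain i where i: "X = Bk i" using X by blast
      obtain j where j: "Y = Bk j" using Y by blast
      have "i \<noteq> j" using XY i j by blast
      then show "X \<inter> Y = {}" using Bk_disj i j by simp
    qed
    show "\<Union> P = space M"
    proof
      show "\<Union> P \<subseteq> space M" unfolding P_def Bk_def by auto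
      show "space M \<subseteq> \<Union> P"
      proof
        fix x assume x: "x \<in> space M"
        have "g x \<in> K" unfolding K_def using g_props[OF x] Bk_cover[OF x] by auto
        then show "x \<in> \<Union> P" unfolding P_def using Bk_cover[OF x] by blast
      qed
    qed
  qed
  have inf_ge: "real k / r \<le> (INF x\<in>Bk k. f x)" if "k \<in> K" for k
  proof (rule cINF_greatest)
    show "Bk k \<noteq> {}" using that unfolding K_def by simp
    fix x assume "x \<in> Bk k"
    then have x: "x \<in> space M" "g x = k" unfolding Bk_def by auto
    then show "real k / r \<le> f x" using g_props[OF x(1)] r by (simp add: divide_le_eq mult.commute)
  qed
  have "(\<Sum>k\<le>n. real k / r * \<nu> (Bk k)) = (\<Sum>k\<in>K. real k / r * \<nu> (Bk k))"
  proof (rule sum.mono_neutral_right)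
    show "finite {..n}" by simp
    show "K \<subseteq> {..n}" unfolding K_def by auto
    show "\<forall>k\<in>{..n} - K. real k / r * \<nu> (Bk k) = 0" unfolding K_def using fa_empty[OF nf] by auto
  qed
  also have "\<dots> \<le> (\<Sum>k\<in>K. (INF x\<in>Bk k. f x) * \<nu> (Bk k))"
    by (rule sum_mono, rule mult_right_mono) (use inf_ge fa_nonneg[OF nf Bk_sets] in auto)
  also have "\<dots> = lsum M \<nu> f P"
    unfolding lsum_def P_def by (simp add: sum.reindex[OF injK])
  finally have low: "(\<Sum>k\<le>n. real k / r * \<nu> (Bk k)) \<le> lsum M \<nu> f P" .
  have sumB: "(\<Sum>k\<le>n. \<nu> (Bk k)) = \<nu> (space M)"
  proof -
    have "(\<Union>k\<in>{..n}. Bk k) = space M"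
    proof
      show "(\<Union>k\<in>{..n}. Bk k) \<subseteq> space M" unfolding Bk_def by auto
      show "space M \<subseteq> (\<Union>k\<in>{..n}. Bk k)" using Bk_cover g_props by fastforce
    qed
    moreover have "disjoint_family_on Bk {..n}" unfolding disjoint_family_on_def using Bk_disj by blast
    ultimately show ?thesis using fa_sum[OF nf, of "{..n}" Bk] Bk_sets by simp
  qed
  have meas: "(\<lambda>x. (real k + 1) / r * indicator (Bk k) x) \<in> borel_measurable M" for k
    using Bk_sets[of k] by measurable
  have intB: "integrable ?N (\<lambda>x. (real k + 1) / r * indicator (Bk k) x)" for k
    by (rule mk_int[OF nu meas, where c="(real k + 1) / r"]) (use r in \<open>auto simp: indicator_def\<close>)
  have "integral\<^sup>L ?N f \<le> integral\<^sup>L ?N (\<lambda>x. \<Sum>k\<le>n. (real k + 1) / r * indicator (Bk k) x)"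
  proof (rule integral_mono)
    show "integrable ?N f" by (rule mk_int[OF nu f, where c=1]) (use f01 in auto)
    show "integrable ?N (\<lambda>x. \<Sum>k\<le>n. (real k + 1) / r * indicator (Bk k) x)"
      by (rule Bochner_Integration.integrable_sum[where f="\<lambda>k x. (real k + 1) / r * indicator (Bk k) x"]) (rule intB)
    fix x assume "x \<in> space ?N"
    then have x: "x \<in> space M" by simp
    have "(\<Sum>k\<le>n. (real k + 1) / r * indicator (Bk k) x) = (\<Sum>k\<le>n. if k = g x then (real (g x) + 1) / r else 0)"
    proof (rule sum.cong[OF refl])
      fix k assume "k \<in> {..n}"
      show "(real k + 1) / r * indicator (Bk k) x = (if k = g x then (real (g x) + 1) / r else 0)"
        using Bk_cover[OF x] unfolding Bk_def by (auto simp: indicator_def)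
    qed
    also have "\<dots> = (real (g x) + 1) / r" using g_props[OF x] by simp
    finally show "f x \<le> (\<Sum>k\<le>n. (real k + 1) / r * indicator (Bk k) x)"
      using g_props[OF x] r by (simp add: le_divide_eq mult.commute)
  qed
  also have "\<dots> = (\<Sum>k\<le>n. (real k + 1) / r * \<nu> (Bk k))"
  proof -
    have "integral\<^sup>L ?N (\<lambda>x. \<Sum>k\<le>n. (real k + 1) / r * indicator (Bk k) x)
        = (\<Sum>k\<le>n. integral\<^sup>L ?N (\<lambda>x. (real k + 1) / r * indicator (Bk k) x))"
      using Bochner_Integration.integral_sum[where I="{..n}" and M="?N" and f="\<lambda>k x. (real k + 1) / r * indicator (Bk k) x"] intB by simp
    also have "\<dots> = (\<Sum>k\<le>n. (real k + 1) / r * \<nu> (Bk k))"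
    proof (rule sum.cong[OF refl])
      fix k
      have e: "Bk k \<inter> space M = Bk k" unfolding Bk_def by auto
      show "integral\<^sup>L ?N (\<lambda>x. (real k + 1) / r * indicator (Bk k) x) = (real k + 1) / r * \<nu> (Bk k)"
        unfolding integral_mult_right_zero integral_indicator mk_space
        using mk_measure[OF nu Bk_sets[of k]] e by simp
    qed
    finally show ?thesis .
  qed
  also have "\<dots> = (\<Sum>k\<le>n. real k / r * \<nu> (Bk k)) + (\<Sum>k\<le>n. \<nu> (Bk k)) / r"
    by (simp add: sum.distrib sum_divide_distrib add_divide_distrib distrib_right)
  finally have "integral\<^sup>L ?N f \<le> (\<Sum>k\<le>n. real k / r * \<nu> (Bk k)) + (\<Sum>k\<le>n. \<nu> (Bk k)) / r" .
  then have "integral\<^sup>L ?N f \<le> (\<Sum>k\<le>n. real k / r * \<nu> (Bk k)) + \<nu> (space M) / r"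
    unfolding sumB .
  then have "integral\<^sup>L ?N f \<le> lsum M \<nu> f P + \<nu> (space M) / r"
    using low by linarith
  then show ?thesis using P unfolding r_def by blast
qed

lemma fi_lebesgue:
  fixes f :: "'a \<Rightarrow> real"
  assumes ne: "space M \<noteq> {}" and nu: "pos_ca M \<nu>" and f: "f \<in> borel_measurable M"
    and f01: "\<forall>x\<in>space M. 0 \<le> f x \<and> f x \<le> 1"
  shows "fa_integral M \<nu> f = integral\<^sup>L (mk M \<nu>) f"
proof (rule antisym)
  show "fa_integral M \<nu> f \<le> integral\<^sup>L (mk M \<nu>) f"
    by (rule fi_least[OF ne]) (rule lsum_le_int[OF nu _ f f01])
  show "integral\<^sup>L (mk M \<nu>) f \<le> fa_integral M \<nu> f"
  proof (rule field_le_epsilon)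
    fix e :: real assume e: "0 < e"
    obtain n :: nat where n: "\<nu> (space M) / e < real n" using reals_Archimedean2 by blast
    have s0: "0 \<le> \<nu> (space M)" using fa_nonneg[OF ca_fa[OF nu] sets.top] .
    then have "0 \<le> \<nu> (space M) / e" using e by simp
    then have n0: "0 < n" using n by linarith
    have "\<nu> (space M) < e * real n" using n e by (simp add: divide_less_eq mult.commute)
    then have q: "\<nu> (space M) / real n \<le> e" using n0 by (simp add: divide_le_eq mult.commute)
    obtain P where P: "meas_partition M P" and le: "integral\<^sup>L (mk M \<nu>) f \<le> lsum M \<nu> f P + \<nu> (space M) / real n"
      using int_le_lsum[OF nu f f01 n0] by blast
    have "lsum M \<nu> f P \<le> fa_integral M \<nu> f" by (rule fi_upper[OF ca_fa[OF nu] f01 P])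
    then show "integral\<^sup>L (mk M \<nu>) f \<le> fa_integral M \<nu> f + e" using le q by linarith
  qed
qed

lemma tf_props:
  assumes tr: "transition_function M p"
  shows "\<And>x E. x \<in> space M \<Longrightarrow> E \<in> sets M \<Longrightarrow> 0 \<le> p x E \<and> p x E \<le> 1"
    and "\<And>x. x \<in> space M \<Longrightarrow> p x (space M) = 1"
    and "\<And>E. E \<in> sets M \<Longrightarrow> (\<lambda>x. p x E) \<in> borel_measurable M"
    and "\<And>x. x \<in> space M \<Longrightarrow> pos_ca M (p x)"
  using tr unfolding transition_function_def by simp_all

lemma markov_ca:
  assumes ne: "space M \<noteq> {}" and nu: "pos_ca M \<nu>" and tr: "transition_function M p"
  shows "pos_ca M (markov_op M p \<nu>)"
proof -
  let ?N = "mk M \<nu>"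
  have f01: "\<forall>x\<in>space M. 0 \<le> p x E \<and> p x E \<le> 1" if "E \<in> sets M" for E
    using tf_props(1)[OF tr _ that] by blast
  have eq: "markov_op M p \<nu> E = integral\<^sup>L ?N (\<lambda>x. p x E)" if E: "E \<in> sets M" for E
    unfolding markov_op_def by (rule fi_lebesgue[OF ne nu tf_props(3)[OF tr E] f01[OF E]])
  have int: "integrable ?N (\<lambda>x. p x E)" if E: "E \<in> sets M" for E
    by (rule mk_int[OF nu tf_props(3)[OF tr E], where c=1]) (use f01[OF E] in auto)
  have pfa: "pos_fa M (markov_op M p \<nu>)"
    unfolding pos_fa_def
  proof (intro conjI ballI impI)
    have "integral\<^sup>L ?N (\<lambda>x. p x {}) = integral\<^sup>L ?N (\<lambda>x. 0)"
    proof (rule Bochner_Integration.integral_cong[OF refl])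
      fix x assume "x \<in> space ?N"
      then have "x \<in> space M" by simp
      then show "p x {} = 0" using fa_empty[OF ca_fa[OF tf_props(4)[OF tr]]] by blast
    qed
    then show "markov_op M p \<nu> {} = 0" using eq[OF sets.empty_sets] by simp
    show "0 \<le> markov_op M p \<nu> E" if E: "E \<in> sets M" for E
      unfolding eq[OF E] by (rule Bochner_Integration.integral_nonneg) (use f01[OF E] in auto)
    fix A B assume A: "A \<in> sets M" and B: "B \<in> sets M" and AB: "A \<inter> B = {}"
    have "integral\<^sup>L ?N (\<lambda>x. p x (A \<union> B)) = integral\<^sup>L ?N (\<lambda>x. p x A + p x B)"
    proof (rule Bochner_Integration.integral_cong[OF refl])
      fix x assume "x \<in> space ?N"
      then have "x \<in> space M" by simp
      then show "p x (A \<union> B) = p x A + p x B"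
        using fa_union[OF ca_fa[OF tf_props(4)[OF tr]] A B AB] by blast
    qed
    also have "\<dots> = integral\<^sup>L ?N (\<lambda>x. p x A) + integral\<^sup>L ?N (\<lambda>x. p x B)"
      by (rule Bochner_Integration.integral_add[OF int[OF A] int[OF B]])
    finally show "markov_op M p \<nu> (A \<union> B) = markov_op M p \<nu> A + markov_op M p \<nu> B"
      using eq A B by simp
  qed
  show ?thesis
    unfolding pos_ca_def count_add_def
  proof (intro conjI pfa allI impI)
    fix F :: "nat \<Rightarrow> _" assume F: "range F \<subseteq> sets M" "disjoint_family F"
    have Fn: "F n \<in> sets M" for n using F by auto
    have U: "(\<Union>n. F n) \<in> sets M" using F by auto
    have ps: "(\<Sum>n<i. markov_op M p \<nu> (F n)) = integral\<^sup>L ?N (\<lambda>x. \<Sum>n<i. p x (F n))" for i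
    proof -
      have "(\<Sum>n<i. markov_op M p \<nu> (F n)) = (\<Sum>n<i. integral\<^sup>L ?N (\<lambda>x. p x (F n)))"
        using eq[OF Fn] by simp
      also have "\<dots> = integral\<^sup>L ?N (\<lambda>x. \<Sum>n<i. p x (F n))"
        using Bochner_Integration.integral_sum[where I="{..<i}" and M="?N" and f="\<lambda>n x. p x (F n)"] int[OF Fn] by simp
      finally show ?thesis .
    qed
    have meas: "(\<lambda>x. p x E) \<in> borel_measurable ?N" if "E \<in> sets M" for E
      by (subst mk_meas) (rule tf_props(3)[OF tr that])
    have lim: "(\<lambda>i. integral\<^sup>L ?N (\<lambda>x. \<Sum>n<i. p x (F n))) \<longlonglongrightarrow> integral\<^sup>L ?N (\<lambda>x. p x (\<Union>n. F n))"
    proof (rule integral_dominated_convergence[where w="\<lambda>x. 1"])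
      show "(\<lambda>x. p x (\<Union>n. F n)) \<in> borel_measurable ?N" by (rule meas[OF U])
      show "(\<lambda>x. \<Sum>n<i. p x (F n)) \<in> borel_measurable ?N" for i
        by (rule borel_measurable_sum) (rule meas[OF Fn])
      show "integrable ?N (\<lambda>x. 1::real)"
        by (rule mk_int[OF nu, where c=1]) auto
      show "AE x in ?N. (\<lambda>i. \<Sum>n<i. p x (F n)) \<longlonglongrightarrow> p x (\<Union>n. F n)"
      proof (rule AE_I2)
        fix x assume "x \<in> space ?N"
        then have x: "x \<in> space M" by simp
        show "(\<lambda>i. \<Sum>n<i. p x (F n)) \<longlonglongrightarrow> p x (\<Union>n. F n)"
          using ca_sums[OF tf_props(4)[OF tr x] F] unfolding sums_def .
      qed
      show "AE x in ?N. norm (\<Sum>n<i. p x (F n)) \<le> 1" for i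
      proof (rule AE_I2)
        fix x assume "x \<in> space ?N"
        then have x: "x \<in> space M" by simp
        have "(\<Sum>n<i. p x (F n)) = p x (\<Union>n<i. F n)"
          using fa_sum_lessThan[OF ca_fa[OF tf_props(4)[OF tr x]] F] by simp
        moreover have "(\<Union>n<i. F n) \<in> sets M" using Fn by auto
        ultimately show "norm (\<Sum>n<i. p x (F n)) \<le> 1" using tf_props(1)[OF tr x] by simp
      qed
    qed
    show "(\<lambda>n. markov_op M p \<nu> (F n)) sums markov_op M p \<nu> (\<Union>n. F n)"
      unfolding sums_def ps eq[OF U] by (rule lim)
  qed
qed

lemma cyc_zero:
  fixes a b :: "nat \<Rightarrow> real"
  assumes le: "\<forall>i<m. a i \<le> b i" and eq: "(\<Sum>i<m. a i) = (\<Sum>i<m. b i)" and i: "i < m"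
  shows "a i = b i"
proof -
  have s0: "(\<Sum>i<m. b i - a i) = 0" using eq by (simp add: sum_subtractf)
  have nn: "\<forall>i\<in>{..<m}. 0 \<le> b i - a i" using le by simp
  have "\<forall>i\<in>{..<m}. b i - a i = 0"
    using sum_nonneg_eq_0_iff[of "{..<m}" "\<lambda>i. b i - a i"] nn s0 by simp
  then show ?thesis using i by simp
qed

theorem theorem4p4:
  fixes M :: "'a measure" and p :: "'a \<Rightarrow> 'a set \<Rightarrow> real" and m :: nat
    and \<mu> \<mu>ca \<mu>pfa :: "nat \<Rightarrow> 'a set \<Rightarrow> real"
  assumes X_inf: "infinite (space M)"
    and singletons: "\<forall>x\<in>space M. {x} \<in> sets M"
    and trans: "transition_function M p"
    and cycle: "fa_cycle M p m \<mu>"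
    and disj: "\<forall>i<m. \<forall>j<m. i \<noteq> j \<longrightarrow> fa_disjoint M (\<mu> i) (\<mu> j)"
    and ca: "\<forall>i<m. pos_ca M (\<mu>ca i)"
    and pfa: "\<forall>i<m. pos_pfa M (\<mu>pfa i)"
    and decomp: "\<forall>i<m. \<forall>E\<in>sets M. \<mu> i E = \<mu>ca i E + \<mu>pfa i E"
  shows "cyclic_rel M p m \<mu>ca \<and> cyclic_rel M p m \<mu>pfa
    \<and> (\<forall>i<m. \<forall>E\<in>sets M. \<mu> i E = \<mu>ca i E + \<mu>pfa i E)
    \<and> pos_ca M (mean_measure m \<mu>ca) \<and> pos_pfa M (mean_measure m \<mu>pfa)
    \<and> (\<forall>E\<in>sets M. mean_measure m \<mu> E = mean_measure m \<mu>ca E + mean_measure m \<mu>pfa E)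
    \<and> (\<forall>\<nu>1 \<nu>2. pos_ca M \<nu>1 \<and> pos_pfa M \<nu>2
          \<and> (\<forall>E\<in>sets M. mean_measure m \<mu> E = \<nu>1 E + \<nu>2 E)
        \<longrightarrow> (\<forall>E\<in>sets M. \<nu>1 E = mean_measure m \<mu>ca E \<and> \<nu>2 E = mean_measure m \<mu>pfa E))
    \<and> (\<forall>i<m. \<forall>j<m. i \<noteq> j \<longrightarrow> fa_disjoint M (\<mu>ca i) (\<mu>ca j))
    \<and> (\<forall>i<m. \<forall>j<m. i \<noteq> j \<longrightarrow> fa_disjoint M (\<mu>pfa i) (\<mu>pfa j))
    \<and> (\<forall>i<m. \<forall>j<m. fa_disjoint M (\<mu>ca i) (\<mu>pfa j))"
proof -
  have ne: "space M \<noteq> {}" using X_inf by auto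
  have m1: "1 \<le> m" and muf: "\<forall>i<m. pos_fa M (\<mu> i)" and cyc: "cyclic_rel M p m \<mu>"
    using cycle unfolding fa_cycle_def by auto
  have cycE: "markov_op M p (\<mu> i) E = \<mu> (Suc i mod m) E" if "i < m" "E \<in> sets M" for i E
    using cyc that unfolding cyclic_rel_def by blast
  have jm: "Suc i mod m < m" for i using m1 by simp
  have caf: "pos_fa M (\<mu>ca i)" if "i < m" for i using ca that ca_fa by blast
  have cac: "pos_ca M (\<mu>ca i)" if "i < m" for i using ca that by blast
  have pfp: "pos_pfa M (\<mu>pfa i)" if "i < m" for i using pfa that by blast
  have pff: "pos_fa M (\<mu>pfa i)" if "i < m" for i using pfa that pfa_fa by blast
  have dec: "\<mu> i E = \<mu>ca i E + \<mu>pfa i E" if "i < m" "E \<in> sets M" for i E using decomp that by blast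
  let ?sp = "space M"
  have f01: "\<forall>x\<in>space M. 0 \<le> p x E \<and> p x E \<le> 1" if "E \<in> sets M" for E
    using tf_props(1)[OF trans _ that] by blast
  have f1: "\<forall>x\<in>space M. p x (space M) = 1" using tf_props(2)[OF trans] by blast
  have csum: "(\<Sum>i<m. g (Suc i mod m)) = (\<Sum>i<m. g i)" for g :: "nat \<Rightarrow> real"
  proof -
    let ?h = "\<lambda>i. Suc i mod m"
    have inj: "inj_on ?h {..<m}"
    proof (rule inj_onI)
      fix i j assume "i \<in> {..<m}" "j \<in> {..<m}" "Suc i mod m = Suc j mod m"
      then show "i = j"
        by (metis lessThan_iff mod_Suc mod_less old.nat.inject zero_neq_one Suc_lessI nat.distinct(1))
    qed
    have img: "?h ` {..<m} = {..<m}"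
      by (rule endo_inj_surj[OF finite_lessThan _ inj]) (use jm in auto)
    have "(\<Sum>i\<in>?h ` {..<m}. g i) = (\<Sum>i<m. g (?h i))" by (rule sum.reindex[OF inj, unfolded comp_def])
    then show ?thesis using img by simp
  qed
  define T where "T i = markov_op M p (\<mu>ca i)" for i
  define S where "S i = markov_op M p (\<mu>pfa i)" for i
  have Tca: "pos_ca M (T i)" if "i < m" for i unfolding T_def by (rule markov_ca[OF ne cac[OF that] trans])
  have Tfa: "pos_fa M (T i)" if "i < m" for i using Tca[OF that] ca_fa by blast
  have Tle: "T i E \<le> \<mu>ca (Suc i mod m) E" if i: "i < m" and E: "E \<in> sets M" for i E
  proof (rule lemmaY[OF Tca[OF i] pfp[OF jm] caf[OF jm] _ E], intro ballI)
    fix E assume E: "E \<in> sets M"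
    have "T i E \<le> markov_op M p (\<mu> i) E"
      unfolding T_def markov_op_def
      by (rule fi_mono[OF ne caf[OF i] muf[rule_format, OF i] _ f01[OF E]]) (use dec[OF i] pff[OF i] fa_nonneg in auto)
    then show "T i E \<le> \<mu>pfa (Suc i mod m) E + \<mu>ca (Suc i mod m) E"
      using cycE[OF i E] dec[OF jm E] by simp
  qed
  have Tsp: "T i ?sp = \<mu>ca i ?sp" if i: "i < m" for i
    unfolding T_def markov_op_def by (rule fi_one[OF ne caf[OF i] f1])
  have Tsp2: "T i ?sp = \<mu>ca (Suc i mod m) ?sp" if i: "i < m" for i
  proof (rule cyc_zero[OF _ _ i])
    show "\<forall>i<m. T i ?sp \<le> \<mu>ca (Suc i mod m) ?sp" using Tle sets.top by simp
    have "(\<Sum>i<m. T i ?sp) = (\<Sum>i<m. \<mu>ca i ?sp)" by (rule sum.cong[OF refl]) (simp add: Tsp)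
    then show "(\<Sum>i<m. T i ?sp) = (\<Sum>i<m. \<mu>ca (Suc i mod m) ?sp)"
      using csum[of "\<lambda>i. \<mu>ca i ?sp"] by simp
  qed
  have Teq: "T i E = \<mu>ca (Suc i mod m) E" if i: "i < m" and E: "E \<in> sets M" for i E
  proof -
    have cE: "?sp - E \<in> sets M" using E by blast
    have "T i E + T i (?sp - E) = T i ?sp" by (rule fa_compl[OF Tfa[OF i] E])
    moreover have "\<mu>ca (Suc i mod m) E + \<mu>ca (Suc i mod m) (?sp - E) = \<mu>ca (Suc i mod m) ?sp"
      by (rule fa_compl[OF caf[OF jm] E])
    moreover have "T i E \<le> \<mu>ca (Suc i mod m) E" by (rule Tle[OF i E])
    moreover have "T i (?sp - E) \<le> \<mu>ca (Suc i mod m) (?sp - E)" by (rule Tle[OF i cE])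
    ultimately show ?thesis using Tsp2[OF i] by linarith
  qed
  have cyc_ca: "cyclic_rel M p m \<mu>ca"
    unfolding cyclic_rel_def using Teq unfolding T_def by blast
  have Sge: "\<mu>pfa (Suc i mod m) E \<le> S i E" if i: "i < m" and E: "E \<in> sets M" for i E
  proof -
    have "markov_op M p (\<mu> i) E \<le> T i E + S i E"
      unfolding T_def S_def markov_op_def
      by (rule fi_subadd[OF ne caf[OF i] pff[OF i] _ f01[OF E]]) (use dec[OF i] in auto)
    then show ?thesis using cycE[OF i E] dec[OF jm E] Teq[OF i E] by simp
  qed
  have Ssp: "S i ?sp = \<mu>pfa i ?sp" if i: "i < m" for i
    unfolding S_def markov_op_def by (rule fi_one[OF ne pff[OF i] f1])
  have Ssp2: "S i ?sp = \<mu>pfa (Suc i mod m) ?sp" if i: "i < m" for i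
  proof -
    have "\<mu>pfa (Suc i mod m) ?sp = S i ?sp"
    proof (rule cyc_zero[OF _ _ i])
      show "\<forall>i<m. \<mu>pfa (Suc i mod m) ?sp \<le> S i ?sp" using Sge sets.top by simp
      have "(\<Sum>i<m. S i ?sp) = (\<Sum>i<m. \<mu>pfa i ?sp)" by (rule sum.cong[OF refl]) (simp add: Ssp)
      then show "(\<Sum>i<m. \<mu>pfa (Suc i mod m) ?sp) = (\<Sum>i<m. S i ?sp)"
        using csum[of "\<lambda>i. \<mu>pfa i ?sp"] by simp
    qed
    then show ?thesis by simp
  qed
  have Seq: "S i E = \<mu>pfa (Suc i mod m) E" if i: "i < m" and E: "E \<in> sets M" for i E
  proof -
    have cE: "?sp - E \<in> sets M" using E by blast
    have pE: "\<forall>x\<in>space M. p x E + p x (?sp - E) \<le> 1"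
    proof
      fix x assume x: "x \<in> space M"
      show "p x E + p x (?sp - E) \<le> 1"
        using fa_compl[OF ca_fa[OF tf_props(4)[OF trans x]] E] tf_props(2)[OF trans x] by simp
    qed
    have "S i E + S i (?sp - E) \<le> \<mu>pfa i ?sp"
      unfolding S_def markov_op_def by (rule fi_pair[OF ne pff[OF i] f01[OF E] f01[OF cE] pE])
    moreover have "\<mu>pfa (Suc i mod m) E + \<mu>pfa (Suc i mod m) (?sp - E) = \<mu>pfa (Suc i mod m) ?sp"
      by (rule fa_compl[OF pff[OF jm] E])
    moreover have "\<mu>pfa (Suc i mod m) E \<le> S i E" by (rule Sge[OF i E])
    moreover have "\<mu>pfa (Suc i mod m) (?sp - E) \<le> S i (?sp - E)" by (rule Sge[OF i cE])
    ultimately show ?thesis using Ssp2[OF i] Ssp[OF i] by linarith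
  qed
  have cyc_pfa: "cyclic_rel M p m \<mu>pfa"
    unfolding cyclic_rel_def using Seq unfolding S_def by blast
  have mpos: "0 < real m" using m1 by simp
  have mean_eq: "mean_measure m g = (\<lambda>E. (\<Sum>k\<in>{..<m}. g k E) / real m)" for g :: "nat \<Rightarrow> 'a set \<Rightarrow> real"
    by (rule ext) (simp add: mean_measure_def)
  have mca: "pos_ca M (mean_measure m \<mu>ca)"
    unfolding mean_eq by (rule scale_ca[OF sum_ca]) (use cac in auto)
  have mpfa_fa: "pos_fa M (mean_measure m \<mu>pfa)"
    unfolding mean_eq by (rule scale_fa[OF sum_fa]) (use pff in auto)
  have mpfa: "pos_pfa M (mean_measure m \<mu>pfa)"
    unfolding pos_pfa_def
  proof (intro conjI mpfa_fa allI impI ballI)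
    fix \<nu> E assume a: "pos_ca M \<nu> \<and> (\<forall>E\<in>sets M. \<nu> E \<le> mean_measure m \<mu>pfa E)" and E: "E \<in> sets M"
    have lc: "pos_ca M (\<lambda>E. real m * \<nu> E)" by (rule scale_ca2) (use a in auto)
    have "\<forall>E\<in>sets M. real m * \<nu> E \<le> (\<Sum>k<m. \<mu>pfa k E)"
    proof
      fix E assume "E \<in> sets M"
      then have "\<nu> E \<le> (\<Sum>k<m. \<mu>pfa k E) / real m" using a unfolding mean_measure_def by blast
      then show "real m * \<nu> E \<le> (\<Sum>k<m. \<mu>pfa k E)" using mpos by (simp add: le_divide_eq mult.commute)
    qed
    then have "real m * \<nu> E = 0" using sum_pfa_zero[OF lc _ _ E] pfp by blast
    then show "\<nu> E = 0" using mpos by simp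
  qed
  have mdec: "mean_measure m \<mu> E = mean_measure m \<mu>ca E + mean_measure m \<mu>pfa E" if E: "E \<in> sets M" for E
  proof -
    have "(\<Sum>k<m. \<mu> k E) = (\<Sum>k<m. \<mu>ca k E) + (\<Sum>k<m. \<mu>pfa k E)"
      unfolding sum.distrib[symmetric] by (rule sum.cong[OF refl]) (use dec E in simp)
    then show ?thesis unfolding mean_measure_def by (simp add: add_divide_distrib)
  qed
  have uniq: "\<forall>\<nu>1 \<nu>2. pos_ca M \<nu>1 \<and> pos_pfa M \<nu>2
          \<and> (\<forall>E\<in>sets M. mean_measure m \<mu> E = \<nu>1 E + \<nu>2 E)
        \<longrightarrow> (\<forall>E\<in>sets M. \<nu>1 E = mean_measure m \<mu>ca E \<and> \<nu>2 E = mean_measure m \<mu>pfa E)"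
  proof (intro allI impI ballI)
    fix \<nu>1 \<nu>2 E assume a: "pos_ca M \<nu>1 \<and> pos_pfa M \<nu>2 \<and> (\<forall>E\<in>sets M. mean_measure m \<mu> E = \<nu>1 E + \<nu>2 E)"
      and E: "E \<in> sets M"
    have n1: "pos_ca M \<nu>1" and n2: "pos_pfa M \<nu>2" and s: "\<forall>E\<in>sets M. mean_measure m \<mu> E = \<nu>1 E + \<nu>2 E"
      using a by auto
    have s': "mean_measure m \<mu> E = \<nu>1 E + \<nu>2 E" if "E \<in> sets M" for E using s[rule_format, OF that] .
    have h1: "\<forall>E\<in>sets M. \<nu>1 E \<le> mean_measure m \<mu>pfa E + mean_measure m \<mu>ca E"
    proof
      fix E assume E: "E \<in> sets M"
      show "\<nu>1 E \<le> mean_measure m \<mu>pfa E + mean_measure m \<mu>ca E"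
        using s'[OF E] mdec[OF E] fa_nonneg[OF pfa_fa[OF n2] E] by linarith
    qed
    have h2: "\<forall>E\<in>sets M. mean_measure m \<mu>ca E \<le> \<nu>2 E + \<nu>1 E"
    proof
      fix E assume E: "E \<in> sets M"
      show "mean_measure m \<mu>ca E \<le> \<nu>2 E + \<nu>1 E"
        using s'[OF E] mdec[OF E] fa_nonneg[OF mpfa_fa E] by linarith
    qed
    have "\<nu>1 E \<le> mean_measure m \<mu>ca E" by (rule lemmaY[OF n1 mpfa ca_fa[OF mca] h1 E])
    moreover have "mean_measure m \<mu>ca E \<le> \<nu>1 E" by (rule lemmaY[OF mca n2 ca_fa[OF n1] h2 E])
    ultimately show "\<nu>1 E = mean_measure m \<mu>ca E \<and> \<nu>2 E = mean_measure m \<mu>pfa E"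
      using s'[OF E] mdec[OF E] by linarith
  qed
  have cale: "\<mu>ca i E \<le> \<mu> i E" if "i < m" "E \<in> sets M" for i E
    using dec[OF that] fa_nonneg[OF pff[OF that(1)] that(2)] by linarith
  have pfale: "\<mu>pfa i E \<le> \<mu> i E" if "i < m" "E \<in> sets M" for i E
    using dec[OF that] fa_nonneg[OF caf[OF that(1)] that(2)] by linarith
  have dca: "\<forall>i<m. \<forall>j<m. i \<noteq> j \<longrightarrow> fa_disjoint M (\<mu>ca i) (\<mu>ca j)"
  proof (intro allI impI)
    fix i j assume i: "i < m" and j: "j < m" and ij: "i \<noteq> j"
    have d: "fa_disjoint M (\<mu> i) (\<mu> j)" using disj[rule_format, OF i j ij] .
    show "fa_disjoint M (\<mu>ca i) (\<mu>ca j)"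
      unfolding fa_disjoint_def
    proof
      fix E assume E: "E \<in> sets M"
      have "fa_meet M (\<mu>ca i) (\<mu>ca j) E \<le> fa_meet M (\<mu> i) (\<mu> j) E"
        by (rule meet_mono[OF caf[OF i] caf[OF j] muf[rule_format, OF i] muf[rule_format, OF j]
              ballI[OF cale[OF i]] ballI[OF cale[OF j]] E])
      moreover have "fa_meet M (\<mu> i) (\<mu> j) E = 0" using d[unfolded fa_disjoint_def, rule_format, OF E] .
      moreover have "0 \<le> fa_meet M (\<mu>ca i) (\<mu>ca j) E" by (rule meet_nonneg[OF caf[OF i] caf[OF j] E])
      ultimately show "fa_meet M (\<mu>ca i) (\<mu>ca j) E = 0" by simp
    qed
  qed
  have dpfa: "\<forall>i<m. \<forall>j<m. i \<noteq> j \<longrightarrow> fa_disjoint M (\<mu>pfa i) (\<mu>pfa j)"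
  proof (intro allI impI)
    fix i j assume i: "i < m" and j: "j < m" and ij: "i \<noteq> j"
    have d: "fa_disjoint M (\<mu> i) (\<mu> j)" using disj[rule_format, OF i j ij] .
    show "fa_disjoint M (\<mu>pfa i) (\<mu>pfa j)"
      unfolding fa_disjoint_def
    proof
      fix E assume E: "E \<in> sets M"
      have "fa_meet M (\<mu>pfa i) (\<mu>pfa j) E \<le> fa_meet M (\<mu> i) (\<mu> j) E"
        by (rule meet_mono[OF pff[OF i] pff[OF j] muf[rule_format, OF i] muf[rule_format, OF j]
              ballI[OF pfale[OF i]] ballI[OF pfale[OF j]] E])
      moreover have "fa_meet M (\<mu> i) (\<mu> j) E = 0" using d[unfolded fa_disjoint_def, rule_format, OF E] .
      moreover have "0 \<le> fa_meet M (\<mu>pfa i) (\<mu>pfa j) E" by (rule meet_nonneg[OF pff[OF i] pff[OF j] E])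
      ultimately show "fa_meet M (\<mu>pfa i) (\<mu>pfa j) E = 0" by simp
    qed
  qed
  have dcp: "\<forall>i<m. \<forall>j<m. fa_disjoint M (\<mu>ca i) (\<mu>pfa j)"
  proof (intro allI impI)
    fix i j assume i: "i < m" and j: "j < m"
    show "fa_disjoint M (\<mu>ca i) (\<mu>pfa j)"
      unfolding fa_disjoint_def by (intro ballI ca_pfa_meet[OF cac[OF i] pfp[OF j]])
  qed
  have all: "\<forall>E\<in>sets M. mean_measure m \<mu> E = mean_measure m \<mu>ca E + mean_measure m \<mu>pfa E"
    using mdec by simp
  show ?thesis
    by (intro conjI cyc_ca cyc_pfa decomp mca mpfa all uniq dca dpfa dcp)
qed

end
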